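(* Let $\theta_i>0$, $m_i>0$, $\sigma>0$, $p>0$, $M=\sum_i m_i$, and define $\mathbb F:\mathbb R^N_+\to\mathbb R^N$ by $$\mathbb F(\mathbf y)_i=My_i-\sum_{k=1}^N m_ky_k-\sigma(\theta_i-y_i^p)y_i .$$ If $\mathbf y\in\mathbb R^N_+$ satisfies $\mathbb F(\mathbf y)=0$, then $d_i:=M+\sigma(p+1)y_i^p-\sigma\theta_i>0$ for all $i$, and the Jacobian matrix $D\mathbb F(\mathbf y)=\operatorname{diag}(d_1,\dots,d_N)-\mathbf 1\mathbf m^T$ (where $\mathbf 1=(1,\dots,1)^T$, $\mathbf m=(m_1,\dots,m_N)^T$) has all leading principal minors positive; in particular $\det D\mathbb F(\mathbf y)=\prod_i d_i\,\big(1-\sum_k m_k/d_k\big)>0$.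
   Context: $\mathbb R^N_+$ denotes the set of vectors with all coordinates strictly positive. *)

theory Defs
  imports Complex_Main "Jordan_Normal_Form.Determinant"
begin

(* Vectors in R^N are represented as functions nat => real, only the
   coordinates 0..N-1 are relevant. *)

definition Mtot :: "nat \<Rightarrow> (nat \<Rightarrow> real) \<Rightarrow> real" where
  "Mtot N m = (\<Sum>k<N. m k)"

definition Fmap :: "nat \<Rightarrow> (nat \<Rightarrow> real) \<Rightarrow> (nat \<Rightarrow> real) \<Rightarrow> real \<Rightarrow> real
                     \<Rightarrow> (nat \<Rightarrow> real) \<Rightarrow> nat \<Rightarrow> real" where
  "Fmap N m \<theta> \<sigma> p y i =
     Mtot N m * y i - (\<Sum>k<N. m k * y k) - \<sigma> * (\<theta> i - y i powr p) * y i"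

definition dcoef :: "nat \<Rightarrow> (nat \<Rightarrow> real) \<Rightarrow> (nat \<Rightarrow> real) \<Rightarrow> real \<Rightarrow> real
                     \<Rightarrow> (nat \<Rightarrow> real) \<Rightarrow> nat \<Rightarrow> real" where
  "dcoef N m \<theta> \<sigma> p y i = Mtot N m + \<sigma> * (p + 1) * y i powr p - \<sigma> * \<theta> i"

definition Jmat :: "nat \<Rightarrow> (nat \<Rightarrow> real) \<Rightarrow> (nat \<Rightarrow> real) \<Rightarrow> real \<Rightarrow> real
                     \<Rightarrow> (nat \<Rightarrow> real) \<Rightarrow> real mat" where
  "Jmat N m \<theta> \<sigma> p y =
     mat N N (\<lambda>(i, j). (if i = j then dcoef N m \<theta> \<sigma> p y i else 0) - m j)"

definition lead_sub :: "nat \<Rightarrow> real mat \<Rightarrow> real mat" where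
  "lead_sub k A = mat k k (\<lambda>(i, j). A $$ (i, j))"

end

theory Submission imports Defs begin

lemma sum_two:
  fixes f :: "nat \<Rightarrow> real"
  assumes "i < n" "l < n" "i \<noteq> l"
  shows "(\<Sum>k<n. (if k = i then a else if k = l then b else 0) * f k) = a * f i + b * f l"
proof -
  have "(\<Sum>k<n. (if k = i then a else if k = l then b else 0) * f k)
      = (\<Sum>k<n. (if k = i then a * f i else 0) + (if k = l then b * f l else 0))"
    by (rule sum.cong) (use assms in auto)
  also have "\<dots> = a * f i + b * f l" using assms by (simp add: sum.distrib)
  finally show ?thesis .
qed

lemma det_rank1:
  fixes d m :: "nat \<Rightarrow> real"
  assumes dnz: "\<forall>i<n. d i \<noteq> 0"
  shows "det (mat n n (\<lambda>(i,j). (if i=j then d i else 0) - m j)) = (\<Prod>i<n. d i) * (1 - (\<Sum>k<n. m k / d k))"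
proof (cases n)
  case 0 then show ?thesis by simp
next
  case (Suc l)
  define A where "A = mat n n (\<lambda>(i,j). (if i=j then d i else 0) - m j)"
  define E :: "real mat" where "E = mat n n (\<lambda>(i,j). if i = j then 1 else if j = l then -1 else 0)"
  define C :: "real mat" where "C = mat n n (\<lambda>(i,j). if i = j then 1 else if j = l then d l / d i else 0)"
  define B :: "real mat" where "B = mat n n (\<lambda>(i,j). if i = l then A $$ (l, j) else (if i=j then d i else 0) - (if j = l then d l else 0))"
  define T :: "real mat" where "T = mat n n (\<lambda>(i,j). if i = l then (if j = l then d l * (1 - (\<Sum>k<n. m k / d k)) else - m j) else (if i=j then d i else 0))"
  have ln: "l < n" using Suc by simp
  have [simp]: "A \<in> carrier_mat n n" "E \<in> carrier_mat n n" "C \<in> carrier_mat n n" "B \<in> carrier_mat n n" "T \<in> carrier_mat n n"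
    by (auto simp: A_def E_def C_def B_def T_def)
  have detE: "det E = 1"
    by (subst det_upper_triangular[of _ n]) (auto simp: E_def upper_triangular_def prod_list_diag_prod Suc)
  have detC: "det C = 1"
    by (subst det_upper_triangular[of _ n]) (auto simp: C_def upper_triangular_def prod_list_diag_prod Suc)
  have EA: "E * A = B"
  proof (rule eq_matI)
    fix i j assume i: "i < dim_row B" and j: "j < dim_col B"
    hence i: "i < n" and j: "j < n" by (auto simp: B_def)
    have "(E * A) $$ (i, j) = (\<Sum>k<n. E $$ (i,k) * A $$ (k,j))"
      using i j by (simp add: scalar_prod_def E_def A_def sum.atLeast0_lessThan_Suc lessThan_atLeast0)
    also have "\<dots> = B $$ (i, j)"
    proof (cases "i = l")
      case True
      have "(\<Sum>k<n. E $$ (i,k) * A $$ (k,j)) = (\<Sum>k<n. (if k = l then A $$ (l, j) else 0))"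
        by (rule sum.cong) (use True i in \<open>auto simp: E_def\<close>)
      then show ?thesis using True i j ln by (simp add: B_def)
    next
      case False
      have "(\<Sum>k<n. E $$ (i,k) * A $$ (k,j)) = (\<Sum>k<n. (if k = i then 1 else if k = l then -1 else 0) * A $$ (k,j))"
        by (rule sum.cong) (use False i in \<open>auto simp: E_def\<close>)
      also have "\<dots> = A $$ (i,j) - A $$ (l,j)" using sum_two[OF i ln False] by simp
      finally show ?thesis using False i j ln by (simp add: B_def A_def)
    qed
    finally show "(E * A) $$ (i, j) = B $$ (i, j)" .
  qed (auto simp: B_def E_def A_def)
  have BC: "B * C = T"
  proof (rule eq_matI)
    fix i j assume i: "i < dim_row T" and j: "j < dim_col T"
    hence i: "i < n" and j: "j < n" by (auto simp: T_def)
    have "(B * C) $$ (i, j) = (\<Sum>k<n. B $$ (i,k) * C $$ (k,j))"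
      using i j by (simp add: scalar_prod_def C_def B_def sum.atLeast0_lessThan_Suc lessThan_atLeast0)
    also have "\<dots> = T $$ (i, j)"
    proof (cases "j = l")
      case False
      have "(\<Sum>k<n. B $$ (i,k) * C $$ (k,j)) = (\<Sum>k<n. (if k = j then B $$ (i,j) else 0))"
        by (rule sum.cong) (use False j in \<open>auto simp: C_def\<close>)
      then show ?thesis using False i j ln by (simp add: B_def T_def A_def)
    next
      case True
      have lt: "{..<n} = insert l {..<l}" using Suc by auto
      have "(\<Sum>k<n. B $$ (i,k) * C $$ (k,j)) = B $$ (i, l) + (\<Sum>k<l. B $$ (i,k) * (d l / d k))"
        unfolding lt using True ln by (simp add: C_def)
      also have "\<dots> = T $$ (i, j)"
      proof (cases "i = l")
        case True2: True
        have "(\<Sum>k<l. B $$ (i,k) * (d l / d k)) = (\<Sum>k<l. - (d l * (m k / d k)))"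
          by (rule sum.cong) (use True2 ln in \<open>auto simp: B_def A_def\<close>)
        also have "\<dots> = - d l * (\<Sum>k<l. m k / d k)" by (simp add: sum_distrib_left sum_negf)
        finally have s: "(\<Sum>k<l. B $$ (i,k) * (d l / d k)) = - d l * (\<Sum>k<l. m k / d k)" .
        have "(\<Sum>k<n. m k / d k) = m l / d l + (\<Sum>k<l. m k / d k)" unfolding lt by simp
        moreover have "d l \<noteq> 0" using dnz ln by auto
        ultimately show ?thesis using True True2 ln s by (simp add: B_def A_def T_def field_simps)
      next
        case False2: False
        have "(\<Sum>k<l. B $$ (i,k) * (d l / d k)) = (\<Sum>k<l. if k = i then d l else 0)"
          by (rule sum.cong) (use False2 ln dnz i in \<open>auto simp: B_def\<close>)
        also have "\<dots> = d l" using False2 i Suc by simp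
        finally show ?thesis using True False2 i ln by (simp add: B_def T_def)
      qed
      finally show ?thesis .
    qed
    finally show "(B * C) $$ (i, j) = T $$ (i, j)" .
  qed (auto simp: B_def C_def T_def)
  have "det T = (\<Prod>i<n. T $$ (i,i))"
    by (subst det_lower_triangular[of n]) (auto simp: T_def prod_list_diag_prod lessThan_atLeast0 Suc)
  also have "\<dots> = (\<Prod>i<n. d i) * (1 - (\<Sum>k<n. m k / d k))"
  proof -
    have lt: "{..<n} = insert l {..<l}" using Suc by auto
    have "(\<Prod>i<l. T $$ (i,i)) = (\<Prod>i<l. d i)" by (rule prod.cong) (auto simp: T_def Suc)
    moreover have "(\<Sum>k<n. m k / d k) = m l / d l + (\<Sum>k<l. m k / d k)" unfolding lt by simp
    ultimately show ?thesis using ln by (simp add: T_def lt algebra_simps)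
  qed
  also have "det T = det A"
    using det_mult[of E n A] det_mult[of B n C] detE detC EA BC by simp
  finally show ?thesis unfolding A_def .
qed

lemma sum_upd: fixes m y :: "nat \<Rightarrow> real" shows "j < N \<Longrightarrow> (\<Sum>k<N. m k * (y(j:=t)) k) = (\<Sum>k<N. m k * y k) + m j * (t - y j)"
proof -
  assume j: "j < N"
  have "(\<Sum>k<N. m k * (y(j:=t)) k) = (\<Sum>k<N. m k * y k + (if k = j then m j * (t - y j) else 0))"
    by (rule sum.cong) (auto simp: right_diff_distrib)
  also have "\<dots> = (\<Sum>k<N. m k * y k) + m j * (t - y j)" using j by (simp add: sum.distrib)
  finally show ?thesis .
qed

lemma deriv_part:
  assumes ypos: "y j > 0" and i: "i < N" and j: "j < N"
  shows "((\<lambda>t. Fmap N m \<theta> \<sigma> p (y(j := t)) i) has_real_derivative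
              (Jmat N m \<theta> \<sigma> p y $$ (i, j))) (at (y j))"
proof (cases "i = j")
  case True
  let ?S = "\<Sum>k<N. m k * y k"
  have eq: "(\<lambda>t. Fmap N m \<theta> \<sigma> p (y(j := t)) i) = (\<lambda>t. Mtot N m * t - (?S + m j * (t - y j)) - \<sigma> * (\<theta> j - t powr p) * t)"
    unfolding Fmap_def sum_upd[OF j] using True by auto
  have "((\<lambda>t. Mtot N m * t - (?S + m j * (t - y j)) - \<sigma> * (\<theta> j - t powr p) * t) has_real_derivative
     (Mtot N m - m j - \<sigma> * (\<theta> j - y j powr p) + \<sigma> * (p * y j powr (p - 1)) * y j)) (at (y j))"
    using ypos by (auto intro!: derivative_eq_intros simp: algebra_simps)
  moreover have "y j powr (p - 1) * y j = y j powr p" using ypos by (simp add: powr_diff)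
  ultimately have "((\<lambda>t. Mtot N m * t - (?S + m j * (t - y j)) - \<sigma> * (\<theta> j - t powr p) * t) has_real_derivative
     (Mtot N m - m j - \<sigma> * (\<theta> j - y j powr p) + \<sigma> * p * y j powr p)) (at (y j))"
    by (simp add: algebra_simps)
  then show ?thesis unfolding eq using True i j
    by (simp add: Jmat_def dcoef_def algebra_simps)
next
  case False
  let ?S = "\<Sum>k<N. m k * y k"
  have eq: "(\<lambda>t. Fmap N m \<theta> \<sigma> p (y(j := t)) i) = (\<lambda>t. Mtot N m * y i - (?S + m j * (t - y j)) - \<sigma> * (\<theta> i - y i powr p) * y i)"
    unfolding Fmap_def sum_upd[OF j] using False by auto
  have "((\<lambda>t. Mtot N m * y i - (?S + m j * (t - y j)) - \<sigma> * (\<theta> i - y i powr p) * y i) has_real_derivative (- m j)) (at (y j))"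
    by (auto intro!: derivative_eq_intros)
  then show ?thesis unfolding eq using False i j by (simp add: Jmat_def)
qed

theorem mainTheorem12:
  fixes N :: nat and \<theta> m y :: "nat \<Rightarrow> real" and \<sigma> p :: real
  assumes \<theta>pos: "\<forall>i<N. \<theta> i > 0"
    and mpos: "\<forall>i<N. m i > 0"
    and \<sigma>pos: "\<sigma> > 0"
    and ppos: "p > 0"
    and ypos: "\<forall>i<N. y i > 0"
    and zero: "\<forall>i<N. Fmap N m \<theta> \<sigma> p y i = 0"
  shows "(\<forall>i<N. dcoef N m \<theta> \<sigma> p y i > 0)
    \<and> (\<forall>i<N. \<forall>j<N.
          ((\<lambda>t. Fmap N m \<theta> \<sigma> p (y(j := t)) i) has_real_derivative
              (Jmat N m \<theta> \<sigma> p y $$ (i, j))) (at (y j)))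
    \<and> (\<forall>k. 1 \<le> k \<and> k \<le> N \<longrightarrow> det (lead_sub k (Jmat N m \<theta> \<sigma> p y)) > 0)
    \<and> det (Jmat N m \<theta> \<sigma> p y) =
        (\<Prod>i<N. dcoef N m \<theta> \<sigma> p y i) *
        (1 - (\<Sum>k<N. m k / dcoef N m \<theta> \<sigma> p y k))
    \<and> det (Jmat N m \<theta> \<sigma> p y) > 0"
proof -
  define S where "S = (\<Sum>k<N. m k * y k)"
  define d where "d = dcoef N m \<theta> \<sigma> p y"
  define a where "a = (\<lambda>i. Mtot N m - \<sigma> * \<theta> i + \<sigma> * y i powr p)"
  have Spos: "S > 0" if "N > 0"
  proof -
    have "S > 0" unfolding S_def
      by (rule sum_pos) (use that mpos ypos in auto)
    then show ?thesis .
  qed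
  have aeq: "a i * y i = S" if i: "i < N" for i
    using zero i unfolding Fmap_def a_def S_def by (auto simp: algebra_simps)
  have apos: "a i > 0" if i: "i < N" for i
  proof -
    have "a i * y i > 0" using aeq[OF i] Spos i by auto
    then show ?thesis using ypos i by (auto simp: zero_less_mult_iff)
  qed
  have dgt: "d i > a i" if i: "i < N" for i
  proof -
    have "\<sigma> * p * y i powr p > 0" using \<sigma>pos ppos ypos i by (auto intro!: mult_pos_pos)
    then show ?thesis unfolding d_def dcoef_def a_def by (simp add: algebra_simps)
  qed
  have dpos: "d i > 0" if "i < N" for i using apos[OF that] dgt[OF that] by simp
  have sumlt: "(\<Sum>k<N. m k / d k) < 1"
  proof (cases "N = 0")
    case True then show ?thesis by simp
  next
    case False
    have "(\<Sum>k<N. m k / d k) < (\<Sum>k<N. m k * y k / S)"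
    proof (rule sum_strict_mono)
      fix k assume "k \<in> {..<N}"
      hence k: "k < N" by simp
      have "m k / d k < m k / a k"
        using mpos k apos[OF k] dgt[OF k] by (simp add: frac_less2)
      also have "m k / a k = m k * y k / S"
        using aeq[OF k] ypos k apos[OF k] by (auto simp: field_simps)
      finally show "m k / d k < m k * y k / S" .
    qed (use False in auto)
    also have "\<dots> = 1" using Spos False by (simp add: S_def sum_divide_distrib[symmetric])
    finally show ?thesis .
  qed
  have J: "Jmat N m \<theta> \<sigma> p y = mat N N (\<lambda>(i,j). (if i=j then d i else 0) - m j)"
    unfolding Jmat_def d_def ..
  have detJ: "det (Jmat N m \<theta> \<sigma> p y) = (\<Prod>i<N. d i) * (1 - (\<Sum>k<N. m k / d k))"
    unfolding J by (rule det_rank1) (use dpos in force)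
  have lead: "det (lead_sub k (Jmat N m \<theta> \<sigma> p y)) > 0" if k: "1 \<le> k" "k \<le> N" for k
  proof -
    have "lead_sub k (Jmat N m \<theta> \<sigma> p y) = mat k k (\<lambda>(i,j). (if i=j then d i else 0) - m j)"
      unfolding lead_sub_def J by (rule eq_matI) (use k in auto)
    hence "det (lead_sub k (Jmat N m \<theta> \<sigma> p y)) = (\<Prod>i<k. d i) * (1 - (\<Sum>j<k. m j / d j))"
    proof -
      have "\<forall>i<k. d i \<noteq> 0"
      proof (intro allI impI)
        fix i assume "i < k"
        then have "i < N" using k by simp
        then show "d i \<noteq> 0" using dpos[of i] by simp
      qed
      then show ?thesis using det_rank1[of k d m] \<open>lead_sub k _ = _\<close> by simp
    qed
    moreover have "(\<Prod>i<k. d i) > 0" by (rule prod_pos) (use dpos k in auto)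
    moreover have "(\<Sum>j<k. m j / d j) \<le> (\<Sum>j<N. m j / d j)"
      by (rule sum_mono2) (use k mpos dpos in \<open>auto intro!: divide_nonneg_pos less_imp_le\<close>)
    ultimately show ?thesis using sumlt by simp
  qed
  have detpos: "det (Jmat N m \<theta> \<sigma> p y) > 0"
  proof -
    have "(\<Prod>i<N. d i) > 0" by (rule prod_pos) (use dpos in auto)
    then show ?thesis using detJ sumlt by simp
  qed
  show ?thesis
    using dpos deriv_part ypos detJ lead detpos unfolding d_def by blast
qed

end
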